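(* The orthomodular lattice MG1 does not admit a strong set of states. More precisely, every state $m$ on MG1 with $m(v)=1$ satisfies $m(u')=1$, although $v\not\le u'$.
   Context: MG1 is the orthomodular lattice given by the following Greechie diagram: that is, the unique (up to isomorphism) orthomodular lattice whose atoms are the listed atoms and whose blocks (maximal Boolean subalgebras) correspond to the listed blocks. In each block, the listed atoms are mutually orthogonal and their join is $1$. The diagram has no loops of order $3$ or $4$. The 19 atoms are $v,e_1,e_2,e_3,a_1,a_2,a_3,b_1,b_2,b_3,c_1,c_2,c_3,d_1,d_2,d_3,f_1,f_2,u$. The 11 blocks (each with three atoms) are: $\{v,e_1,a_1\}$, $\{v,e_2,a_2\}$, $\{v,e_3,a_3\}$, $\{a_1,b_1,c_1\}$, $\{a_2,b_2,c_2\}$, $\{a_3,b_3,c_3\}$, $\{b_1,b_2,b_3\}$, $\{c_1,f_1,d_1\}$, $\{c_2,f_2,d_2\}$, $\{c_3,u,d_3\}$, $\{d_1,d_2,d_3\}$. A state on an ortholattice $L$ is a map $m:L\to[0,1]$ with $m(1)=1$ and $a\le b'\Rightarrow m(a\cup b)=m(a)+m(b)$. $L$ admits a strong set of states if there is a nonempty set $S$ of states such that for all $a,b\in L$ with $a\not\le b$ some $m\in S$ has $m(a)=1$ and $m(b)\ne1$. *)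

theory Defs
  imports Complex_Main
begin

text \<open>Concrete realisation of the orthomodular lattice MG1 given by its Greechie
diagram.  Since every block has three atoms and the diagram has no loops of
order 3 or 4, the elements of MG1 are exactly 0, 1, the 19 atoms and their
19 orthocomplements (each block is the 8-element Boolean algebra
{0, a, b, c, a', b', c', 1}).\<close>

datatype atom = V | E1 | E2 | E3 | A1 | A2 | A3 | B1 | B2 | B3
  | C1 | C2 | C3 | D1 | D2 | D3 | F1 | F2 | U

definition blocks :: "atom set list" where
  "blocks = [{V,E1,A1}, {V,E2,A2}, {V,E3,A3}, {A1,B1,C1}, {A2,B2,C2}, {A3,B3,C3},
             {B1,B2,B3}, {C1,F1,D1}, {C2,F2,D2}, {C3,U,D3}, {D1,D2,D3}]"

definition orth :: "atom \<Rightarrow> atom \<Rightarrow> bool" where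
  "orth a b \<longleftrightarrow> a \<noteq> b \<and> (\<exists>B\<in>set blocks. a \<in> B \<and> b \<in> B)"

datatype mg1 = Zero | One | At atom | Co atom

fun mg1_le :: "mg1 \<Rightarrow> mg1 \<Rightarrow> bool" where
  "mg1_le Zero _ = True"
| "mg1_le _ One = True"
| "mg1_le (At a) (At b) = (a = b)"
| "mg1_le (At a) (Co b) = orth a b"
| "mg1_le (Co a) (Co b) = (a = b)"
| "mg1_le _ _ = False"

fun mg1_compl :: "mg1 \<Rightarrow> mg1" where
  "mg1_compl Zero = One"
| "mg1_compl One = Zero"
| "mg1_compl (At a) = Co a"
| "mg1_compl (Co a) = At a"

definition mg1_join :: "mg1 \<Rightarrow> mg1 \<Rightarrow> mg1" where
  "mg1_join x y = (THE z. mg1_le x z \<and> mg1_le y z \<and>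
                     (\<forall>w. mg1_le x w \<and> mg1_le y w \<longrightarrow> mg1_le z w))"

definition mg1_state :: "(mg1 \<Rightarrow> real) \<Rightarrow> bool" where
  "mg1_state m \<longleftrightarrow> (\<forall>x. 0 \<le> m x \<and> m x \<le> 1) \<and> m One = 1 \<and>
     (\<forall>a b. mg1_le a (mg1_compl b) \<longrightarrow> m (mg1_join a b) = m a + m b)"

definition mg1_strong_set_of_states :: "(mg1 \<Rightarrow> real) set \<Rightarrow> bool" where
  "mg1_strong_set_of_states S \<longleftrightarrow> S \<noteq> {} \<and> (\<forall>m\<in>S. mg1_state m) \<and>
     (\<forall>a b. \<not> mg1_le a b \<longrightarrow> (\<exists>m\<in>S. m a = 1 \<and> m b \<noteq> 1))"

definition mg1_admits_strong_set_of_states :: bool where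
  "mg1_admits_strong_set_of_states \<longleftrightarrow> (\<exists>S. mg1_strong_set_of_states S)"

end

theory Submission
  imports Defs
begin

lemma orth_irrefl: "\<not> orth a a" by (simp add: orth_def)

lemma le_antisym: "mg1_le p q \<Longrightarrow> mg1_le q p \<Longrightarrow> p = q"
  by (cases p; cases q; auto simp: orth_irrefl)

lemma join_eq:
  assumes "mg1_le x z" "mg1_le y z" "\<And>w. mg1_le x w \<Longrightarrow> mg1_le y w \<Longrightarrow> mg1_le z w"
  shows "mg1_join x y = z"
  unfolding mg1_join_def
  apply (rule the_equality)
  using assms le_antisym by blast+

lemma join_compl: "mg1_join (At c) (Co c) = One"
proof (rule join_eq)
  fix w assume "mg1_le (At c) w" "mg1_le (Co c) w"
  then show "mg1_le One w" by (cases w) (auto simp: orth_irrefl)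
qed auto

lemma block_sum:
  assumes m: "mg1_state m" and ab: "orth a b" and ac: "orth a c" and bc: "orth b c"
    and u: "\<forall>d. orth a d \<and> orth b d \<longrightarrow> d = c"
  shows "m (At a) + m (At b) + m (At c) = 1"
proof -
  have j: "mg1_join (At a) (At b) = Co c"
  proof (rule join_eq)
    fix w assume "mg1_le (At a) w" "mg1_le (At b) w"
    then show "mg1_le (Co c) w" using u ab by (cases w) (auto simp: orth_irrefl)
  qed (use ac bc in auto)
  have add: "\<forall>x y. mg1_le x (mg1_compl y) \<longrightarrow> m (mg1_join x y) = m x + m y" "m One = 1"
    using m by (auto simp: mg1_state_def)
  have "m (Co c) = m (At a) + m (At b)" using add(1)[rule_format, of "At a" "At b"] ab j by simp
  moreover have "m One = m (At c) + m (Co c)"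
    using add(1)[rule_format, of "At c" "Co c"] join_compl by simp
  ultimately show ?thesis using add(2) by simp
qed

lemma bs:
  assumes "mg1_state m" "orth a b" "orth a c" "orth b c"
    "\<forall>d. orth a d \<and> orth b d \<longrightarrow> d = c"
  shows "m (At a) + m (At b) + m (At c) = 1"
  using block_sum assms by blast


lemma compl_sum: "mg1_state m \<Longrightarrow> m (At c) + m (Co c) = 1"
proof -
  assume "mg1_state m"
  then have "m (mg1_join (At c) (Co c)) = m (At c) + m (Co c)" "m One = 1"
    unfolding mg1_state_def by auto
  then show ?thesis using join_compl by simp
qed

lemma main: assumes m: "mg1_state m" and v: "m (At V) = 1" shows "m (Co U) = 1"
proof -
  have nn: "\<And>x. 0 \<le> m x" using m by (simp add: mg1_state_def)
  have 1: "m (At V) + m (At E1) + m (At A1) = 1" by (rule bs[OF m]) (auto simp: orth_def blocks_def)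
  have 2: "m (At V) + m (At E2) + m (At A2) = 1" by (rule bs[OF m]) (auto simp: orth_def blocks_def)
  have 3: "m (At V) + m (At E3) + m (At A3) = 1" by (rule bs[OF m]) (auto simp: orth_def blocks_def)
  have 4: "m (At A1) + m (At B1) + m (At C1) = 1" by (rule bs[OF m]) (auto simp: orth_def blocks_def)
  have 5: "m (At A2) + m (At B2) + m (At C2) = 1" by (rule bs[OF m]) (auto simp: orth_def blocks_def)
  have 6: "m (At A3) + m (At B3) + m (At C3) = 1" by (rule bs[OF m]) (auto simp: orth_def blocks_def)
  have 7: "m (At B1) + m (At B2) + m (At B3) = 1" by (rule bs[OF m]) (auto simp: orth_def blocks_def)
  have 8: "m (At C1) + m (At F1) + m (At D1) = 1" by (rule bs[OF m]) (auto simp: orth_def blocks_def)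
  have 9: "m (At C2) + m (At F2) + m (At D2) = 1" by (rule bs[OF m]) (auto simp: orth_def blocks_def)
  have 10: "m (At C3) + m (At U) + m (At D3) = 1" by (rule bs[OF m]) (auto simp: orth_def blocks_def)
  have 11: "m (At D1) + m (At D2) + m (At D3) = 1" by (rule bs[OF m]) (auto simp: orth_def blocks_def)
  have "m (At U) = 0" using 1 2 3 4 5 6 7 8 9 10 11 v nn[of "At E1"] nn[of "At E2"] nn[of "At E3"]
     nn[of "At A1"] nn[of "At A2"] nn[of "At A3"] nn[of "At F1"] nn[of "At F2"] nn[of "At U"]
    by linarith
  then show ?thesis using compl_sum[OF m, of U] by simp
qed

theorem theorem6p6:
  shows "\<not> mg1_admits_strong_set_of_states \<and>
         (\<forall>m. mg1_state m \<and> m (At V) = 1 \<longrightarrow> m (Co U) = 1) \<and>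
         \<not> mg1_le (At V) (Co U)"
proof -
  have nle: "\<not> mg1_le (At V) (Co U)" by (simp add: orth_def blocks_def)
  have "\<not> mg1_admits_strong_set_of_states"
    unfolding mg1_admits_strong_set_of_states_def mg1_strong_set_of_states_def
    using nle main by blast
  then show ?thesis using main nle by blast
qed

end
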